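(* Let $H(s)$ be an SSS system of order $n$, and let $H_r(s)$ be a strictly proper ZIP system of order $r<n$ such that $H-H_r$ vanishes at $2r$ points $s_1,\dots,s_{2r}\in(0,\infty)$, counted with multiplicity (i.e. $H_r$ interpolates $H$ at these points, not necessarily distinct). Then all remaining zeros of the error system $H(s)-H_r(s)$ lie in $(-\infty,0)$.
   Context: A system $H(s)=\boldsymbol c^T(s\boldsymbol I-\boldsymbol A)^{-1}\boldsymbol b$ is state-space-symmetric (SSS) if $\boldsymbol A=\boldsymbol A^T$ and $\boldsymbol c=\boldsymbol b$; systems are assumed asymptotically stable. A system $H(s)=K\frac{\prod_{i=1}^{m-1}(s-z_i)}{\prod_{j=1}^m(s-\lambda_j)}$ is a strictly proper zero-interlacing-pole (ZIP) system if $0>\lambda_1>z_1>\lambda_2>z_2>\cdots>z_{m-1}>\lambda_m$; equivalently $H(s)=\sum_{i=1}^m\frac{b_i}{s-\lambda_i}$ with distinct $\lambda_i<0$ and all $b_i>0$. *)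

theory Defs
  imports "Jordan_Normal_Form.Determinant" "Jordan_Normal_Form.Char_Poly"
    "HOL-Computational_Algebra.Normalized_Fraction" "HOL-Computational_Algebra.Polynomial_Factorial" "HOL-Computational_Algebra.Field_as_Ring" "HOL-Library.Multiset"
begin

text \<open>Transfer function of the SSS system (A, b, c = b), as a rational function over the
complex numbers: c^T (sI - A)^{-1} b = c^T adj(sI - A) b / det(sI - A).
Here char_poly_matrix A is the polynomial matrix sI - A.\<close>
definition sss_tf :: "real mat \<Rightarrow> real vec \<Rightarrow> complex poly fract" where
  "sss_tf A b =
     (let M = char_poly_matrix (map_mat complex_of_real A);
          bp = map_vec (\<lambda>x. [:complex_of_real x:]) b
      in Fract (bp \<bullet> (adj_mat M *\<^sub>v bp)) (det M))"

definition pr_tf :: "nat \<Rightarrow> (nat \<Rightarrow> real) \<Rightarrow> (nat \<Rightarrow> real) \<Rightarrow> complex poly fract" where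
  "pr_tf r bi lam = (\<Sum>i<r. Fract [:complex_of_real (bi i):] [:- complex_of_real (lam i), 1:])"

definition zero_mult :: "complex poly fract \<Rightarrow> complex \<Rightarrow> nat" where
  "zero_mult F z = order z (fst (quot_of_fract F))"

text \<open>State-space-symmetric, asymptotically stable system of order n.\<close>
definition is_SSS :: "nat \<Rightarrow> real mat \<Rightarrow> real vec \<Rightarrow> bool" where
  "is_SSS n A b \<longleftrightarrow> A \<in> carrier_mat n n \<and> b \<in> carrier_vec n \<and> A = transpose_mat A \<and>
     (\<forall>k. eigenvalue (map_mat complex_of_real A) k \<longrightarrow> Re k < 0)"

definition is_ZIP :: "nat \<Rightarrow> (nat \<Rightarrow> real) \<Rightarrow> (nat \<Rightarrow> real) \<Rightarrow> bool" where
  "is_ZIP r bi lam \<longleftrightarrow> 0 < r \<and> inj_on lam {..<r} \<and> (\<forall>i<r. lam i < 0 \<and> bi i > 0)"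

end

theory Submission
  imports Defs "Jordan_Normal_Form.Schur_Decomposition"
begin

hide_const (open) Coset.order



definition gN :: "real set \<Rightarrow> (real \<Rightarrow> real) \<Rightarrow> real \<Rightarrow> real" where
  "gN P w x = (\<Sum>p\<in>P. w p * (\<Prod>q\<in>P-{p}. (x - q)))"

lemma gN_at:
  assumes "finite P" "p \<in> P"
  shows "gN P w p = w p * (\<Prod>q\<in>P-{p}. (p - q))"
proof -
  have "gN P w p = w p * (\<Prod>q\<in>P-{p}. (p - q)) + (\<Sum>p'\<in>P-{p}. w p' * (\<Prod>q\<in>P-{p'}. (p - q)))"
    unfolding gN_def using assms by (simp add: sum.remove)
  also have "(\<Sum>p'\<in>P-{p}. w p' * (\<Prod>q\<in>P-{p'}. (p - q))) = 0"
  proof (rule sum.neutral, intro ballI)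
    fix p' assume "p' \<in> P - {p}"
    then have "p \<in> P - {p'}" using assms by auto
    then have "(\<Prod>q\<in>P-{p'}. (p - q)) = 0"
      using assms by (intro prod_zero) auto
    then show "w p' * (\<Prod>q\<in>P-{p'}. (p - q)) = 0" by simp
  qed
  finally show ?thesis by simp
qed

lemma gN_cont: "continuous_on S (gN P w)"
  unfolding gN_def by (intro continuous_intros)

lemma gap_root:
  assumes fin: "finite P" and p: "p \<in> P" and p': "p' \<in> P" and lt: "p < p'"
    and nb: "\<forall>q\<in>P. \<not> (p < q \<and> q < p')"
    and ww: "w p * w p' > 0"
  shows "\<exists>x. p < x \<and> x < p' \<and> gN P w x = 0"
proof -
  have P1: "P - {p} = insert p' (P - {p, p'})" using p' lt by auto
  have P2: "P - {p'} = insert p (P - {p, p'})" using p lt by auto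
  have f3: "finite (P - {p, p'})" using fin by auto
  have a: "(\<Prod>q\<in>P-{p}. (p - q)) = (p - p') * (\<Prod>q\<in>P-{p,p'}. (p - q))"
    unfolding P1 using f3 by (subst prod.insert) auto
  have b: "(\<Prod>q\<in>P-{p'}. (p' - q)) = (p' - p) * (\<Prod>q\<in>P-{p,p'}. (p' - q))"
    unfolding P2 using f3 by (subst prod.insert) auto
  have c: "(\<Prod>q\<in>P-{p,p'}. (p - q)) * (\<Prod>q\<in>P-{p,p'}. (p' - q)) > 0"
  proof -
    have "(\<Prod>q\<in>P-{p,p'}. (p - q)) * (\<Prod>q\<in>P-{p,p'}. (p' - q)) = (\<Prod>q\<in>P-{p,p'}. (p - q) * (p' - q))"
      by (simp add: prod.distrib)
    also have "\<dots> > 0"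
    proof (rule prod_pos)
      fix q assume q: "q \<in> P - {p, p'}"
      then have "q < p \<or> q > p'" using nb lt by force
      then show "(p - q) * (p' - q) > 0"
        using lt by (auto intro: mult_pos_pos mult_neg_neg)
    qed
    finally show ?thesis .
  qed
  have d: "gN P w p * gN P w p' = (w p * w p') * ((p - p') * (p' - p)) *
      ((\<Prod>q\<in>P-{p,p'}. (p - q)) * (\<Prod>q\<in>P-{p,p'}. (p' - q)))"
    unfolding gN_at[OF fin p] gN_at[OF fin p'] a b by (simp add: algebra_simps)
  have e: "(p - p') * (p' - p) < 0" using lt by (simp add: mult_neg_pos)
  have neg: "gN P w p * gN P w p' < 0"
    unfolding d using ww c e by (simp add: mult_pos_neg mult_neg_pos)
  have cont: "continuous_on {p..p'} (gN P w)" by (rule gN_cont)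
  have "\<exists>x\<ge>p. x \<le> p' \<and> gN P w x = 0"
  proof (cases "gN P w p < 0")
    case True
    then have "gN P w p' > 0" using neg by (simp add: mult_less_0_iff)
    then show ?thesis using IVT'[of "gN P w" p 0 p'] True cont lt by auto
  next
    case False
    then have "gN P w p > 0" "gN P w p' < 0" using neg by (auto simp: mult_less_0_iff)
    then show ?thesis using IVT2'[of "gN P w" p' 0 p] cont lt by auto
  qed
  then obtain x where x: "p \<le> x" "x \<le> p'" "gN P w x = 0" by blast
  have "x \<noteq> p" "x \<noteq> p'" using x neg by auto
  then show ?thesis using x by (intro exI[of _ x]) (auto simp: less_le)
qed

lemma count_gaps:
  assumes fin: "finite P" and nz: "\<forall>p\<in>P. w p \<noteq> 0" and neg: "\<forall>p\<in>P. p < 0"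
  shows "\<exists>R. finite R \<and> card P - 1 \<le> card R + 2 * card {p\<in>P. w p < 0} \<and> (\<forall>x\<in>R. x < 0 \<and> gN P w x = 0)"
proof -
  define ps where "ps = sorted_list_of_set P"
  define m where "m = length ps"
  have setps: "set ps = P" unfolding ps_def using fin by simp
  have mP: "m = card P" unfolding m_def ps_def using fin by simp
  have sw: "sorted_wrt (<) ps" unfolding ps_def by simp
  have lt: "\<And>i j. i < j \<Longrightarrow> j < m \<Longrightarrow> ps!i < ps!j"
    using sw unfolding m_def by (simp add: sorted_wrt_iff_nth_less)
  have le: "\<And>i j. i \<le> j \<Longrightarrow> j < m \<Longrightarrow> ps!i \<le> ps!j"
    using lt by (metis le_less)
  have inP: "\<And>i. i < m \<Longrightarrow> ps!i \<in> P" using setps m_def by auto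
  have nb: "\<And>j. j + 1 < m \<Longrightarrow> \<forall>q\<in>P. \<not> (ps!j < q \<and> q < ps!(j+1))"
  proof (intro ballI notI)
    fix j q assume j: "j + 1 < m" and q: "q \<in> P" and b: "ps!j < q \<and> q < ps!(j+1)"
    from q setps obtain k where k: "k < m" "q = ps!k" unfolding m_def by (metis in_set_conv_nth)
    show False
    proof (cases "k \<le> j")
      case True then show ?thesis using le[OF True] j b k by auto
    next
      case False then have jk: "j + 1 \<le> k" by simp
      show ?thesis using le[OF jk] b k by auto
    qed
  qed
  define Good where "Good = {j. j + 1 < m \<and> w (ps!j) * w (ps!(j+1)) > 0}"
  define Bad where "Bad = {j. j + 1 < m \<and> \<not> w (ps!j) * w (ps!(j+1)) > 0}"
  define NI where "NI = {i. i < m \<and> w (ps!i) < 0}"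
  have GB: "Good \<union> Bad = {..<m-1}" "Good \<inter> Bad = {}" unfolding Good_def Bad_def by auto
  have finG: "finite Good" "finite Bad" using GB(1) finite_lessThan[of "m-1"] by (metis finite_Un)+
  have cGB: "card Good + card Bad = m - 1"
    using card_Un_disjoint[OF finG GB(2)] GB(1) by simp
  have BadNI: "Bad \<subseteq> NI \<union> (\<lambda>i. i - 1) ` NI"
  proof
    fix j assume j: "j \<in> Bad"
    then have j1: "j + 1 < m" and np: "\<not> w (ps!j) * w (ps!(j+1)) > 0" unfolding Bad_def by auto
    have "w (ps!j) \<noteq> 0" "w (ps!(j+1)) \<noteq> 0" using nz inP j1 by auto
    then have "w (ps!j) < 0 \<or> w (ps!(j+1)) < 0" using np
      by (auto simp: zero_less_mult_iff linorder_neq_iff)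
    then show "j \<in> NI \<union> (\<lambda>i. i - 1) ` NI"
    proof
      assume "w (ps!j) < 0" then show ?thesis using j1 unfolding NI_def by auto
    next
      assume "w (ps!(j+1)) < 0"
      then have "j + 1 \<in> NI" using j1 unfolding NI_def by auto
      then show ?thesis by (intro UnI2 image_eqI[of _ _ "j+1"]) auto
    qed
  qed
  have finNI: "finite NI" unfolding NI_def by auto
  have "card Bad \<le> card (NI \<union> (\<lambda>i. i - 1) ` NI)"
    by (rule card_mono[OF _ BadNI]) (use finNI in auto)
  also have "\<dots> \<le> card NI + card ((\<lambda>i. i - 1) ` NI)" by (rule card_Un_le)
  also have "\<dots> \<le> 2 * card NI" using card_image_le[OF finNI, of "\<lambda>i. i - 1"] by simp
  finally have cB: "card Bad \<le> 2 * card NI" .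
  have "card NI = card ((!) ps ` NI)"
  proof (rule card_image[symmetric])
    have "distinct ps" using sw by (simp add: strict_sorted_iff)
    then show "inj_on ((!) ps) NI" unfolding NI_def m_def
      by (intro inj_on_nth) auto
  qed
  also have "(!) ps ` NI = {p\<in>P. w p < 0}"
  proof
    show "(!) ps ` NI \<subseteq> {p \<in> P. w p < 0}" unfolding NI_def using inP by auto
    show "{p \<in> P. w p < 0} \<subseteq> (!) ps ` NI"
    proof
      fix p assume "p \<in> {p \<in> P. w p < 0}"
      then have pP: "p \<in> set ps" "w p < 0" using setps by auto
      then obtain k where "k < m" "p = ps!k" "w p < 0" unfolding m_def by (auto simp: in_set_conv_nth)
      then show "p \<in> (!) ps ` NI" unfolding NI_def by auto
    qed
  qed
  finally have cNI: "card NI = card {p\<in>P. w p < 0}" .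
  have ex: "\<forall>j\<in>Good. \<exists>x. ps!j < x \<and> x < ps!(j+1) \<and> gN P w x = 0"
  proof
    fix j assume j: "j \<in> Good"
    then have j1: "j + 1 < m" and ww: "w (ps!j) * w (ps!(j+1)) > 0" unfolding Good_def by auto
    show "\<exists>x. ps!j < x \<and> x < ps!(j+1) \<and> gN P w x = 0"
      by (rule gap_root[OF fin inP inP lt nb ww]) (use j1 in auto)
  qed
  then obtain xf where xf: "\<forall>j\<in>Good. ps!j < xf j \<and> xf j < ps!(j+1) \<and> gN P w (xf j) = 0"
    using bchoice[OF ex] by blast
  have inj: "inj_on xf Good"
  proof (rule inj_onI, rule ccontr)
    fix i j assume i: "i \<in> Good" and j: "j \<in> Good" and eq: "xf i = xf j" and ne: "i \<noteq> j"
    have key: "\<And>a b. a \<in> Good \<Longrightarrow> b \<in> Good \<Longrightarrow> a < b \<Longrightarrow> xf a < xf b"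
    proof -
      fix a b assume a: "a \<in> Good" and b: "b \<in> Good" and ab: "a < b"
      have "b < m" using b unfolding Good_def by auto
      then have "ps!(a+1) \<le> ps!b" using ab by (intro le) auto
      moreover have "xf a < ps!(a+1)" "ps!b < xf b" using xf a b by auto
      ultimately show "xf a < xf b" by linarith
    qed
    show False using ne key[OF i j] key[OF j i] eq by (cases "i < j") auto
  qed
  define R where "R = xf ` Good"
  have "card R = card Good" unfolding R_def by (rule card_image[OF inj])
  moreover have "\<forall>x\<in>R. x < 0 \<and> gN P w x = 0"
  proof
    fix x assume "x \<in> R"
    then obtain j where j: "j \<in> Good" "x = xf j" unfolding R_def by auto
    then have "j + 1 < m" unfolding Good_def by auto
    then have "ps!(j+1) < 0" using inP neg by auto
    then show "x < 0 \<and> gN P w x = 0" using xf j by fastforce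
  qed
  moreover have "finite R" unfolding R_def using finG by auto
  ultimately show ?thesis using cGB cB cNI mP by (intro exI[of _ R]) auto
qed

definition NP :: "real set \<Rightarrow> (real \<Rightarrow> real) \<Rightarrow> complex poly" where
  "NP P w = (\<Sum>p\<in>P. [:complex_of_real (w p):] * (\<Prod>q\<in>P-{p}. [:- complex_of_real q, 1:]))"

lemma poly_NP: "poly (NP P w) (complex_of_real x) = complex_of_real (gN P w x)"
  unfolding NP_def gN_def by (simp add: poly_sum poly_prod)

lemma degree_NP: assumes "finite P" shows "degree (NP P w) \<le> card P - 1"
  unfolding NP_def
proof (rule degree_sum_le[OF assms])
  fix p assume p: "p \<in> P"
  have "degree (\<Prod>q\<in>P-{p}. [:- complex_of_real q, 1:]) \<le> sum (degree \<circ> (\<lambda>q. [:- complex_of_real q, 1:])) (P - {p})"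
    by (rule degree_prod_sum_le) (use assms in auto)
  also have "\<dots> = card (P - {p})" by simp
  also have "\<dots> = card P - 1" using p assms by simp
  finally show "degree ([:complex_of_real (w p):] * (\<Prod>q\<in>P-{p}. [:- complex_of_real q, 1:])) \<le> card P - 1"
    by (metis (no_types, lifting) degree_mult_le degree_pCons_0 le_trans add_0)
qed

lemma count_image_of_real: "count (image_mset complex_of_real S) (complex_of_real x) = count S x"
proof -
  have "complex_of_real -` {complex_of_real x} \<inter> set_mset S \<subseteq> {x}" by auto
  then have "complex_of_real -` {complex_of_real x} \<inter> set_mset S = (if x \<in># S then {x} else {})"
    by auto
  then show ?thesis by (simp add: count_image_mset not_in_iff)
qed

lemma core:
  fixes P :: "real set" and w :: "real \<Rightarrow> real" and S :: "real multiset"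
  assumes fin: "finite P" and nz: "\<forall>p\<in>P. w p \<noteq> 0" and neg: "\<forall>p\<in>P. p < 0"
    and cneg: "card {p\<in>P. w p < 0} \<le> r"
    and N0: "NP P w \<noteq> 0"
    and sz: "size S = 2 * r" and pos: "\<forall>x\<in>#S. x > 0"
    and cnt: "\<forall>x. count S x \<le> order (complex_of_real x) (NP P w)"
  shows "\<forall>z. count (image_mset complex_of_real S) z < order z (NP P w) \<longrightarrow> z \<in> \<real> \<and> Re z < 0"
proof (intro allI impI, rule ccontr)
  fix z assume cz: "count (image_mset complex_of_real S) z < order z (NP P w)"
    and nz': "\<not> (z \<in> \<real> \<and> Re z < 0)"
  define N where "N = NP P w"
  define S' where "S' = image_mset complex_of_real S"
  obtain R where R: "finite R" "card P - 1 \<le> card R + 2 * card {p\<in>P. w p < 0}"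
      "\<forall>x\<in>R. x < 0 \<and> gN P w x = 0"
    using count_gaps[OF fin nz neg] by blast
  define A where "A = complex_of_real ` R"
  define B where "B = insert z (set_mset S')"
  have finA: "finite A" "finite B" unfolding A_def B_def S'_def using R by auto
  have AB: "A \<inter> B = {}"
  proof -
    have "a \<notin> B" if "a \<in> A" for a
    proof -
      from that obtain x where x: "x \<in> R" "a = complex_of_real x" unfolding A_def by auto
      then have "x < 0" using R by auto
      moreover have "a \<noteq> z" using nz' x \<open>x < 0\<close> by auto
      moreover have "a \<notin> set_mset S'" using pos x \<open>x < 0\<close> unfolding S'_def by fastforce
      ultimately show ?thesis unfolding B_def by auto
    qed
    then show ?thesis by auto
  qed
  have roots: "A \<union> B \<subseteq> {x. poly N x = 0}"
  proof
    fix a assume "a \<in> A \<union> B"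
    then consider "a \<in> A" | "a = z" | "a \<in> set_mset S'" unfolding B_def by auto
    then show "a \<in> {x. poly N x = 0}"
    proof cases
      case 1
      then obtain x where "x \<in> R" "a = complex_of_real x" unfolding A_def by auto
      then show ?thesis using R unfolding N_def by (simp add: poly_NP)
    next
      case 2
      then have "order a N \<noteq> 0" using cz unfolding N_def by auto
      then show ?thesis by (simp add: order_root)
    next
      case 3
      then obtain x where x: "x \<in># S" "a = complex_of_real x" unfolding S'_def by auto
      then have "count S x \<ge> 1" by simp
      then have "order a N \<noteq> 0" using cnt x unfolding N_def by (metis le_trans not_one_le_zero)
      then show ?thesis by (simp add: order_root)
    qed
  qed
  have finroots: "finite {x. poly N x = 0}" using N0 unfolding N_def by (rule poly_roots_finite)
  have "(\<Sum>x\<in>A \<union> B. order x N) \<le> (\<Sum>x | poly N x = 0. order x N)"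
    by (rule sum_mono2[OF finroots roots]) auto
  also have "\<dots> \<le> degree N" using N0 unfolding N_def by (rule sum_order_le_degree)
  also have "\<dots> \<le> card P - 1" unfolding N_def by (rule degree_NP[OF fin])
  finally have up: "(\<Sum>x\<in>A \<union> B. order x N) \<le> card P - 1" .
  have sA: "card R \<le> (\<Sum>x\<in>A. order x N)"
  proof -
    have "card R = card A" unfolding A_def by (rule card_image[symmetric]) (auto simp: inj_on_def)
    also have "\<dots> = (\<Sum>x\<in>A. 1)" by simp
    also have "\<dots> \<le> (\<Sum>x\<in>A. order x N)"
    proof (rule sum_mono)
      fix x assume "x \<in> A"
      then have "poly N x = 0" using roots by auto
      then have "order x N \<noteq> 0" using N0 unfolding N_def by (simp add: order_root)
      then show "1 \<le> order x N" by simp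
    qed
    finally show ?thesis .
  qed
  have sB: "2 * r + 1 \<le> (\<Sum>x\<in>B. order x N)"
  proof -
    have "(\<Sum>x\<in>B. count S' x + (if x = z then 1 else 0)) \<le> (\<Sum>x\<in>B. order x N)"
    proof (rule sum_mono)
      fix x assume x: "x \<in> B"
      show "count S' x + (if x = z then 1 else 0) \<le> order x N"
      proof (cases "x = z")
        case True then show ?thesis using cz unfolding S'_def N_def by simp
      next
        case False
        then have "x \<in> set_mset S'" using x unfolding B_def by auto
        then obtain y where y: "x = complex_of_real y" unfolding S'_def by auto
        show ?thesis using False cnt count_image_of_real[of S y] unfolding y S'_def N_def by simp
      qed
    qed
    moreover have "(\<Sum>x\<in>B. count S' x + (if x = z then 1 else 0)) = (\<Sum>x\<in>B. count S' x) + 1"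
      using finA(2) unfolding B_def by (simp add: sum.distrib)
    moreover have "(\<Sum>x\<in>B. count S' x) = (\<Sum>x\<in>set_mset S'. count S' x)"
      unfolding B_def by (cases "z \<in> set_mset S'") (auto simp: insert_absorb not_in_iff)
    moreover have "(\<Sum>x\<in>set_mset S'. count S' x) = 2 * r"
      using size_multiset_overloaded_eq[of S'] sz unfolding S'_def by simp
    ultimately show ?thesis by simp
  qed
  have "(\<Sum>x\<in>A \<union> B. order x N) = (\<Sum>x\<in>A. order x N) + (\<Sum>x\<in>B. order x N)"
    by (rule sum.union_disjoint[OF finA AB])
  then have "card R + (2 * r + 1) \<le> card P - 1" using up sA sB by linarith
  then show False using R(2) cneg by linarith
qed



abbreviation LF :: "real \<Rightarrow> complex poly fract" where
  "LF x \<equiv> to_fract [:- complex_of_real x, 1:]"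
abbreviation CF :: "real \<Rightarrow> complex poly fract" where
  "CF c \<equiv> to_fract [:complex_of_real c:]"

lemma to_fract_prod': "to_fract (prod f A) = (\<Prod>x\<in>A. to_fract (f x))"
  by (induction A rule: infinite_finite_induct) auto

lemma LF_nz: "LF x \<noteq> 0" by simp

lemma frac_combine:
  fixes L c :: "'k \<Rightarrow> 'a :: field"
  assumes fin: "finite K" and nz: "\<forall>k\<in>K. L k \<noteq> 0"
  shows "(\<Sum>k\<in>K. c k / L k) = (\<Sum>k\<in>K. c k * (\<Prod>j\<in>K-{k}. L j)) / (\<Prod>j\<in>K. L j)"
proof -
  have "(\<Sum>k\<in>K. c k * (\<Prod>j\<in>K-{k}. L j)) / (\<Prod>j\<in>K. L j) =
        (\<Sum>k\<in>K. c k * (\<Prod>j\<in>K-{k}. L j) / (\<Prod>j\<in>K. L j))"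
    by (rule sum_divide_distrib)
  also have "\<dots> = (\<Sum>k\<in>K. c k / L k)"
  proof (rule sum.cong[OF refl])
    fix k assume k: "k \<in> K"
    have Q: "(\<Prod>j\<in>K-{k}. L j) \<noteq> 0" using nz fin by auto
    have "(\<Prod>j\<in>K. L j) = L k * (\<Prod>j\<in>K-{k}. L j)" using fin k by (rule prod.remove)
    then show "c k * (\<Prod>j\<in>K-{k}. L j) / (\<Prod>j\<in>K. L j) = c k / L k"
      using Q nz k by (simp add: field_simps)
  qed
  finally show ?thesis by simp
qed

lemma CF_sum: "(\<Sum>k\<in>K. CF (c k)) = CF (\<Sum>k\<in>K. c k)"
proof (induction K rule: infinite_finite_induct)
  case (insert x F) then show ?case by (simp add: flip: to_fract_add)
qed auto

definition DP :: "real set \<Rightarrow> complex poly" where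
  "DP P = (\<Prod>p\<in>P. [:- complex_of_real p, 1:])"

lemma group_poles:
  fixes c p :: "'k \<Rightarrow> real"
  assumes fin: "finite K"
  defines "W \<equiv> (\<lambda>x. \<Sum>k\<in>{k\<in>K. p k = x}. c k)"
  defines "P \<equiv> {x\<in>p ` K. W x \<noteq> 0}"
  shows "(\<Sum>k\<in>K. CF (c k) / LF (p k)) = to_fract (NP P W) / to_fract (DP P)"
proof -
  have "(\<Sum>k\<in>K. CF (c k) / LF (p k)) = (\<Sum>x\<in>p ` K. \<Sum>k\<in>{k\<in>K. p k = x}. CF (c k) / LF (p k))"
    by (rule sum.image_gen[OF fin])
  also have "\<dots> = (\<Sum>x\<in>p ` K. CF (W x) / LF x)"
  proof (rule sum.cong[OF refl])
    fix x assume "x \<in> p ` K"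
    have "(\<Sum>k\<in>{k\<in>K. p k = x}. CF (c k) / LF (p k)) = (\<Sum>k\<in>{k\<in>K. p k = x}. CF (c k) / LF x)"
      by (rule sum.cong) auto
    also have "\<dots> = (\<Sum>k\<in>{k\<in>K. p k = x}. CF (c k)) / LF x" by (rule sum_divide_distrib[symmetric])
    also have "\<dots> = CF (W x) / LF x" unfolding W_def CF_sum ..
    finally show "(\<Sum>k\<in>{k\<in>K. p k = x}. CF (c k) / LF (p k)) = CF (W x) / LF x" .
  qed
  also have "\<dots> = (\<Sum>x\<in>P. CF (W x) / LF x)"
    unfolding P_def by (rule sum.mono_neutral_right) (use fin in auto)
  also have "\<dots> = (\<Sum>x\<in>P. CF (W x) * (\<Prod>j\<in>P-{x}. LF j)) / (\<Prod>j\<in>P. LF j)"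
    by (rule frac_combine) (use fin in \<open>auto simp: P_def\<close>)
  also have "\<dots> = to_fract (NP P W) / to_fract (DP P)"
    by (simp only: NP_def DP_def to_fract_sum to_fract_mult to_fract_prod')
  finally show ?thesis .
qed

lemma zero_mult_NP:
  assumes fin: "finite P" and nz: "\<forall>p\<in>P. w p \<noteq> 0" and N0: "NP P w \<noteq> 0"
  shows "zero_mult (to_fract (NP P w) / to_fract (DP P)) z = order z (NP P w)"
proof -
  define N where "N = NP P w"
  define D where "D = DP P"
  have D0: "D \<noteq> 0" unfolding D_def DP_def using fin by auto
  have Nroot: "poly N (complex_of_real p) \<noteq> 0" if p: "p \<in> P" for p
  proof -
    have "(\<Prod>q\<in>P-{p}. (p - q)) \<noteq> 0" using fin by auto
    then have "gN P w p \<noteq> 0" unfolding gN_at[OF fin p] using nz p by simp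
    then show ?thesis unfolding N_def poly_NP by simp
  qed
  have "to_fract N / to_fract D = quot_to_fract (N, D)"
    by (simp add: quot_to_fract_def Fract_conv_to_fract)
  then have q: "quot_of_fract (to_fract N / to_fract D) = normalize_quot (N, D)"
    by (simp add: quot_of_fract_quot_to_fract)
  obtain d where d: "N = fst (normalize_quot (N, D)) * d" "D = snd (normalize_quot (N, D)) * d" "d \<noteq> 0"
    using normalize_quotE[OF D0, of N] by metis
  define F where "F = fst (normalize_quot (N, D))"
  have NF: "N = F * d" unfolding F_def using d by simp
  have "order z N = order z F + order z d" unfolding NF
    by (rule order_mult) (use N0 NF N_def in auto)
  moreover have "order z d = 0"
  proof (cases "poly D z = 0")
    case False
    then have "poly d z \<noteq> 0" using d(2) by (metis mult_zero_right poly_mult)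
    then show ?thesis by (rule order_0I)
  next
    case True
    then obtain p where p: "p \<in> P" "z = complex_of_real p"
      unfolding D_def DP_def poly_prod using fin by auto
    then have "order z N = 0" using Nroot by (intro order_0I) auto
    then show ?thesis using \<open>order z N = order z F + order z d\<close> by simp
  qed
  ultimately have "order z N = order z F" by simp
  then show ?thesis using q unfolding zero_mult_def F_def N_def D_def by simp
qed



lemma real_ev:
  fixes A :: "real mat"
  assumes A: "A \<in> carrier_mat n n" and sym: "transpose_mat A = A" and n: "n > 0"
  shows "\<exists>e v. v \<in> carrier_vec n \<and> v \<noteq> 0\<^sub>v n \<and> A *\<^sub>v v = e \<cdot>\<^sub>v v"
proof -
  define Ac where "Ac = map_mat complex_of_real A"
  have Ac: "Ac \<in> carrier_mat n n" unfolding Ac_def using A by simp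
  have "degree (char_poly Ac) = n" using degree_monic_char_poly[OF Ac] by simp
  then have "\<not> constant (poly (char_poly Ac))" using n by (simp add: constant_degree)
  then obtain z where "poly (char_poly Ac) z = 0" using fundamental_theorem_of_algebra by blast
  then have "eigenvalue Ac z" using eigenvalue_root_char_poly[OF Ac] by simp
  then obtain v where ev: "eigenvector Ac v z" unfolding eigenvalue_def by blast
  then have v: "v \<in> carrier_vec n" and v0: "v \<noteq> 0\<^sub>v n" and Av: "Ac *\<^sub>v v = z \<cdot>\<^sub>v v"
    unfolding eigenvector_def using Ac by auto
  define x where "x = vec n (\<lambda>i. Re (v $ i))"
  define y where "y = vec n (\<lambda>i. Im (v $ i))"
  define a where "a = Re z"
  define \<beta> where "\<beta> = Im z"
  have x: "x \<in> carrier_vec n" and y: "y \<in> carrier_vec n" unfolding x_def y_def by auto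
  have row: "(\<Sum>j\<in>{0..<n}. complex_of_real (A $$ (i,j)) * v $ j) = z * v $ i" if i: "i < n" for i
  proof -
    have "(Ac *\<^sub>v v) $ i = (z \<cdot>\<^sub>v v) $ i" using Av by simp
    then show ?thesis using i A v unfolding Ac_def by (simp add: scalar_prod_def)
  qed
  have Ax: "A *\<^sub>v x = vec n (\<lambda>i. a * x $ i - \<beta> * y $ i)"
  proof (rule eq_vecI)
    fix i assume "i < dim_vec (vec n (\<lambda>i. a * x $ i - \<beta> * y $ i))"
    then have i: "i < n" by simp
    have "Re (\<Sum>j\<in>{0..<n}. complex_of_real (A $$ (i,j)) * v $ j) = Re (z * v $ i)" using row[OF i] by simp
    then show "(A *\<^sub>v x) $ i = vec n (\<lambda>i. a * x $ i - \<beta> * y $ i) $ i"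
      using i A unfolding x_def y_def a_def \<beta>_def by (simp add: scalar_prod_def Re_sum)
  qed (use A in simp)
  have Ay: "A *\<^sub>v y = vec n (\<lambda>i. \<beta> * x $ i + a * y $ i)"
  proof (rule eq_vecI)
    fix i assume "i < dim_vec (vec n (\<lambda>i. \<beta> * x $ i + a * y $ i))"
    then have i: "i < n" by simp
    have "Im (\<Sum>j\<in>{0..<n}. complex_of_real (A $$ (i,j)) * v $ j) = Im (z * v $ i)" using row[OF i] by simp
    then show "(A *\<^sub>v y) $ i = vec n (\<lambda>i. \<beta> * x $ i + a * y $ i) $ i"
      using i A unfolding x_def y_def a_def \<beta>_def by (simp add: scalar_prod_def Im_sum algebra_simps)
  qed (use A in simp)
  have "(transpose_mat A *\<^sub>v y) \<bullet> x = y \<bullet> (A *\<^sub>v x)"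
    by (rule transpose_vec_mult_scalar[OF A x y])
  then have "(A *\<^sub>v y) \<bullet> x = y \<bullet> (A *\<^sub>v x)" using sym by simp
  then have "(\<Sum>i\<in>{0..<n}. (\<beta> * x $ i + a * y $ i) * x $ i) = (\<Sum>i\<in>{0..<n}. y $ i * (a * x $ i - \<beta> * y $ i))"
    unfolding Ax Ay scalar_prod_def using x y by simp
  then have "\<beta> * (\<Sum>i\<in>{0..<n}. x $ i * x $ i + y $ i * y $ i) = 0"
    by (simp add: algebra_simps sum.distrib sum_distrib_left sum_subtractf)
  moreover have "(\<Sum>i\<in>{0..<n}. x $ i * x $ i + y $ i * y $ i) > 0"
  proof -
    obtain k where k: "k < n" "v $ k \<noteq> 0" using v0 v by (metis eq_vecI carrier_vecD index_zero_vec)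
    then have "x $ k \<noteq> 0 \<or> y $ k \<noteq> 0" unfolding x_def y_def using complex_eqI by force
    then have pos: "x $ k * x $ k + y $ k * y $ k > 0"
      using not_real_square_gt_zero[of "x $ k"] not_real_square_gt_zero[of "y $ k"]
        zero_le_square[of "x $ k"] zero_le_square[of "y $ k"] by linarith
    have "x $ k * x $ k + y $ k * y $ k \<le> (\<Sum>i\<in>{0..<n}. x $ i * x $ i + y $ i * y $ i)"
      by (rule member_le_sum) (use k in auto)
    then show ?thesis using pos by linarith
  qed
  ultimately have b0: "\<beta> = 0" by simp
  have Ax': "A *\<^sub>v x = a \<cdot>\<^sub>v x" unfolding Ax b0 using x by (intro eq_vecI) auto
  have Ay': "A *\<^sub>v y = a \<cdot>\<^sub>v y" unfolding Ay b0 using y by (intro eq_vecI) auto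
  show ?thesis
  proof (cases "x = 0\<^sub>v n")
    case False then show ?thesis using x Ax' by blast
  next
    case True
    have "y \<noteq> 0\<^sub>v n"
    proof
      assume y0: "y = 0\<^sub>v n"
      have "v = 0\<^sub>v n"
      proof (rule eq_vecI)
        fix i assume "i < dim_vec (0\<^sub>v n :: complex vec)"
        then have i: "i < n" by simp
        have "Re (v $ i) = 0" "Im (v $ i) = 0"
          using arg_cong[OF True, of "\<lambda>w. w $ i"] arg_cong[OF y0, of "\<lambda>w. w $ i"] i
          unfolding x_def y_def by auto
        then show "v $ i = 0\<^sub>v n $ i" using i by (simp add: complex_eq_iff)
      qed (use v in simp)
      then show False using v0 by simp
    qed
    then show ?thesis using y Ay' by blast
  qed
qed

definition diagm :: "nat \<Rightarrow> (nat \<Rightarrow> real) \<Rightarrow> real mat" where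
  "diagm n d = mat n n (\<lambda>(i,j). if i = j then d i else 0)"

lemma diagm_carrier[simp]: "diagm n d \<in> carrier_mat n n" unfolding diagm_def by simp
lemma diagm_dims[simp]: "dim_row (diagm n d) = n" "dim_col (diagm n d) = n" unfolding diagm_def by simp_all

lemma spectral:
  fixes A :: "real mat"
  assumes "A \<in> carrier_mat n n" "transpose_mat A = A"
  shows "\<exists>U d. U \<in> carrier_mat n n \<and> transpose_mat U * U = 1\<^sub>m n \<and> A = U * diagm n d * transpose_mat U"
  using assms
proof (induction n arbitrary: A)
  case 0
  then show ?case
    by (intro exI[of _ "1\<^sub>m 0"] exI[of _ "\<lambda>_. 0"]) (auto intro!: eq_matI)
next
  case (Suc m)
  define n where "n = Suc m"
  have A: "A \<in> carrier_mat n n" and sym: "transpose_mat A = A" using Suc.prems n_def by auto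
  obtain e v0 where v0: "v0 \<in> carrier_vec n" "v0 \<noteq> 0\<^sub>v n" and ev0: "A *\<^sub>v v0 = e \<cdot>\<^sub>v v0"
    using real_ev[OF A sym] n_def by auto
  interpret cof_vec_space n "TYPE(real)" .
  define bs where "bs = basis_completion v0"
  note bc = basis_completion[OF v0, folded bs_def]
  define ws where "ws = gram_schmidt n bs"
  note gs = gram_schmidt_result[OF bc(2) bc(4) bc(5) ws_def]
  have lws: "length ws = n" using gs bc by simp
  have wsc: "\<And>i. i < n \<Longrightarrow> ws ! i \<in> carrier_vec n" using gs lws by auto
  from bc(6,7) obtain vs where bsv: "bs = v0 # vs" unfolding n_def by (cases bs) auto
  have "hd ws = v0" using gram_schmidt_hd[OF v0(1), of vs] unfolding ws_def bsv .
  moreover have "ws \<noteq> []" using lws n_def by auto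
  ultimately have hdws: "ws ! 0 = v0" by (simp add: hd_conv_nth)
  have orth: "\<And>i j. i < n \<Longrightarrow> j < n \<Longrightarrow> ws ! i \<bullet> ws ! j = 0 \<longleftrightarrow> i \<noteq> j"
    using corthogonalD[OF gs(2)] lws by simp
  have sqpos: "\<And>i. i < n \<Longrightarrow> ws ! i \<bullet> ws ! i > 0"
  proof -
    fix i assume i: "i < n"
    have "ws ! i \<bullet>c ws ! i \<ge> 0" by (rule conjugate_square_ge_0_vec)
    then show "ws ! i \<bullet> ws ! i > 0" using orth[OF i i] by simp
  qed
  define nv where "nv = (\<lambda>w::real vec. (1 / sqrt (w \<bullet> w)) \<cdot>\<^sub>v w)"
  define us where "us = map nv ws"
  have lus: "length us = n" unfolding us_def using lws by simp
  have usc: "\<And>i. i < n \<Longrightarrow> us ! i \<in> carrier_vec n" unfolding us_def nv_def using wsc lws by simp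
  have usorth: "\<And>i j. i < n \<Longrightarrow> j < n \<Longrightarrow> us ! i \<bullet> us ! j = (if i = j then 1 else 0)"
  proof -
    fix i j assume i: "i < n" and j: "j < n"
    have "us ! i \<bullet> us ! j = (1 / sqrt (ws ! i \<bullet> ws ! i)) * (1 / sqrt (ws ! j \<bullet> ws ! j)) * (ws ! i \<bullet> ws ! j)"
      unfolding us_def nv_def using i j lws wsc[OF i] wsc[OF j] by simp
    then show "us ! i \<bullet> us ! j = (if i = j then 1 else 0)"
      using orth[OF i j] sqpos[OF i] by (auto simp: field_simps)
  qed
  define u0 where "u0 = us ! 0"
  have u0: "u0 = nv v0" unfolding u0_def us_def using hdws lws n_def by simp
  have Au0: "A *\<^sub>v u0 = e \<cdot>\<^sub>v u0"
    unfolding u0 nv_def using mult_mat_vec[OF A v0(1)] ev0 v0 by (simp add: smult_smult_assoc mult.commute)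
  define W where "W = mat_of_cols n us"
  have W: "W \<in> carrier_mat n n" unfolding W_def using lus by (metis mat_of_cols_carrier(1))
  have colW: "\<And>j. j < n \<Longrightarrow> col W j = us ! j" unfolding W_def using lus usc by simp
  have WtW: "transpose_mat W * W = 1\<^sub>m n"
  proof (rule eq_matI)
    fix i j assume "i < dim_row (1\<^sub>m n :: real mat)" "j < dim_col (1\<^sub>m n :: real mat)"
    then have i: "i < n" and j: "j < n" by auto
    show "(transpose_mat W * W) $$ (i, j) = 1\<^sub>m n $$ (i, j)"
      using i j W by (simp add: colW usorth)
  qed (use W in auto)
  have WWt: "W * transpose_mat W = 1\<^sub>m n"
    by (rule mat_mult_left_right_inverse[OF _ W WtW]) (use W in simp)
  define A' where "A' = transpose_mat W * A * W"
  have A'c: "A' \<in> carrier_mat n n" unfolding A'_def using W A by simp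
  have A'e: "\<And>i j. i < n \<Longrightarrow> j < n \<Longrightarrow> A' $$ (i,j) = us ! i \<bullet> (A *\<^sub>v us ! j)"
  proof -
    fix i j assume i: "i < n" and j: "j < n"
    have "A' = transpose_mat W * (A * W)" unfolding A'_def
      by (rule assoc_mult_mat[of _ n n _ n _ n]) (use W A in auto)
    then have "A' $$ (i,j) = row (transpose_mat W) i \<bullet> col (A * W) j"
      using i j W A by simp
    also have "row (transpose_mat W) i = us ! i" using i W colW by simp
    also have "col (A * W) j = A *\<^sub>v us ! j" using col_mult2[OF A W j] colW[OF j] by simp
    finally show "A' $$ (i,j) = us ! i \<bullet> (A *\<^sub>v us ! j)" .
  qed
  have A'sym: "\<And>i j. i < n \<Longrightarrow> j < n \<Longrightarrow> A' $$ (i,j) = A' $$ (j,i)"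
  proof -
    fix i j assume i: "i < n" and j: "j < n"
    have "(transpose_mat A *\<^sub>v us ! i) \<bullet> us ! j = us ! i \<bullet> (A *\<^sub>v us ! j)"
      by (rule transpose_vec_mult_scalar[OF A usc[OF j] usc[OF i]])
    moreover have "(A *\<^sub>v us ! i) \<bullet> us ! j = us ! j \<bullet> (A *\<^sub>v us ! i)"
      by (rule comm_scalar_prod[of _ n]) (use A usc[OF i] usc[OF j] in auto)
    ultimately have "us ! i \<bullet> (A *\<^sub>v us ! j) = us ! j \<bullet> (A *\<^sub>v us ! i)"
      using sym by simp
    then show "A' $$ (i,j) = A' $$ (j,i)" using A'e i j by simp
  qed
  have A'0: "\<And>i. i < n \<Longrightarrow> A' $$ (i,0) = (if i = 0 then e else 0)"
  proof -
    fix i assume i: "i < n"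
    have "A' $$ (i,0) = us ! i \<bullet> (e \<cdot>\<^sub>v u0)" using A'e[OF i] n_def Au0 u0_def by simp
    also have "\<dots> = e * (us ! i \<bullet> us ! 0)" unfolding u0_def using usc[OF i] usc[of 0] n_def by simp
    finally show "A' $$ (i,0) = (if i = 0 then e else 0)" using usorth[OF i, of 0] n_def by simp
  qed
  define A3 where "A3 = mat m m (\<lambda>(i,j). A' $$ (Suc i, Suc j))"
  have A3c: "A3 \<in> carrier_mat m m" unfolding A3_def by simp
  have A3sym: "transpose_mat A3 = A3"
    unfolding A3_def by (rule eq_matI) (auto simp: n_def intro: A'sym)
  obtain U3 d3 where U3: "U3 \<in> carrier_mat m m" "transpose_mat U3 * U3 = 1\<^sub>m m"
    "A3 = U3 * diagm m d3 * transpose_mat U3"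
    using Suc.IH[OF A3c A3sym] by blast
  define E1 where "E1 = mat 1 1 (\<lambda>_. e)"
  have E1c: "E1 \<in> carrier_mat 1 1" unfolding E1_def by simp
  have A'blk: "A' = four_block_mat E1 (0\<^sub>m 1 m) (0\<^sub>m m 1) A3"
  proof (rule eq_matI)
    fix i j assume "i < dim_row (four_block_mat E1 (0\<^sub>m 1 m) (0\<^sub>m m 1) A3)"
      "j < dim_col (four_block_mat E1 (0\<^sub>m 1 m) (0\<^sub>m m 1) A3)"
    then have i: "i < n" and j: "j < n" using E1c A3c n_def by auto
    show "A' $$ (i, j) = four_block_mat E1 (0\<^sub>m 1 m) (0\<^sub>m m 1) A3 $$ (i, j)"
    proof (cases "i = 0")
      case True
      then show ?thesis using A'sym[OF i j] A'0[OF j] i j E1c A3c n_def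
        by (cases j) (auto simp: E1_def)
    next
      case False
      then obtain i' where i': "i = Suc i'" by (cases i) auto
      show ?thesis
      proof (cases "j = 0")
        case True then show ?thesis using A'0[OF i] i' i E1c A3c n_def by auto
      next
        case False
        then obtain j' where j': "j = Suc j'" by (cases j) auto
        show ?thesis using i j i' j' E1c A3c n_def by (simp add: A3_def)
      qed
    qed
  qed (use A'c E1c A3c n_def in auto)
  define d where "d = (\<lambda>i. if i = 0 then e else d3 (i - 1))"
  have Dblk: "diagm n d = four_block_mat E1 (0\<^sub>m 1 m) (0\<^sub>m m 1) (diagm m d3)"
    by (rule eq_matI) (auto simp: diagm_def d_def E1_def n_def)
  define B where "B = four_block_mat (1\<^sub>m 1) (0\<^sub>m 1 m) (0\<^sub>m m 1) U3"
  have Bc: "B \<in> carrier_mat n n" unfolding B_def n_def using U3 by auto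
  have Bt: "transpose_mat B = four_block_mat (1\<^sub>m 1) (0\<^sub>m 1 m) (0\<^sub>m m 1) (transpose_mat U3)"
    unfolding B_def by (subst transpose_four_block_mat) (use U3 in auto)
  have c11: "(1\<^sub>m 1 :: real mat) \<in> carrier_mat 1 1" and c1m: "(0\<^sub>m 1 m :: real mat) \<in> carrier_mat 1 m"
    and cm1: "(0\<^sub>m m 1 :: real mat) \<in> carrier_mat m 1" and U3t: "transpose_mat U3 \<in> carrier_mat m m"
    and D3c: "diagm m d3 \<in> carrier_mat m m" using U3 by auto
  have BtB: "transpose_mat B * B = 1\<^sub>m n"
    unfolding Bt unfolding B_def
    by (subst mult_four_block_mat[OF c11 c1m cm1 U3t c11 c1m cm1 U3(1)]) (use U3 in \<open>auto simp: n_def\<close>)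
  have BD: "B * diagm n d = four_block_mat E1 (0\<^sub>m 1 m) (0\<^sub>m m 1) (U3 * diagm m d3)"
    unfolding Dblk unfolding B_def
    by (subst mult_four_block_mat[OF c11 c1m cm1 U3(1) E1c c1m cm1 D3c]) (use U3 E1c in \<open>auto simp: E1_def\<close>)
  have UD3: "U3 * diagm m d3 \<in> carrier_mat m m" using U3 by auto
  have BDB: "B * diagm n d * transpose_mat B = A'"
    unfolding BD Bt A'blk
    by (subst mult_four_block_mat[OF E1c c1m cm1 UD3 c11 c1m cm1 U3t]) (use U3 E1c in \<open>auto simp: E1_def\<close>)
  define U where "U = W * B"
  have Uc: "U \<in> carrier_mat n n" unfolding U_def using W Bc by simp
  have Ut: "transpose_mat U = transpose_mat B * transpose_mat W"
    unfolding U_def by (rule transpose_mult[OF W Bc])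
  have Wt: "transpose_mat W \<in> carrier_mat n n" and Btc: "transpose_mat B \<in> carrier_mat n n"
    using W Bc by auto
  have "transpose_mat U * U = (transpose_mat B * transpose_mat W) * (W * B)"
    using Ut unfolding U_def by simp
  also have "\<dots> = transpose_mat B * ((transpose_mat W * W) * B)"
    using W Bc Wt Btc by (simp add: assoc_mult_mat[of _ n n _ n _ n] mult_carrier_mat[of _ n n _ n])
  also have "\<dots> = 1\<^sub>m n" unfolding WtW using Bc BtB by simp
  finally have UtU: "transpose_mat U * U = 1\<^sub>m n" .
  have "U * diagm n d * transpose_mat U = (W * B) * diagm n d * (transpose_mat B * transpose_mat W)"
    using Ut unfolding U_def by simp
  also have "\<dots> = W * (B * diagm n d * transpose_mat B) * transpose_mat W"
    using W Bc Wt Btc by (simp add: assoc_mult_mat[of _ n n _ n _ n] mult_carrier_mat[of _ n n _ n])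
  also have "\<dots> = W * (transpose_mat W * A * W) * transpose_mat W"
    unfolding BDB A'_def ..
  also have "\<dots> = (W * transpose_mat W) * A * (W * transpose_mat W)"
    using W A Wt by (simp add: assoc_mult_mat[of _ n n _ n _ n] mult_carrier_mat[of _ n n _ n])
  also have "\<dots> = A" unfolding WWt using A by simp
  finally have "A = U * diagm n d * transpose_mat U" by simp
  then show ?case using Uc UtU unfolding n_def by blast
qed



lemma (in semiring_hom) scalar_prod_hom:
  "dim_vec v = dim_vec w \<Longrightarrow> hom (v \<bullet> w) = vec\<^sub>h v \<bullet> vec\<^sub>h w"
  unfolding scalar_prod_def by (simp add: hom_sum hom_mult)

lemma sss_facts:
  assumes "is_SSS n A b"
  shows "\<exists>U d. U \<in> carrier_mat n n \<and> transpose_mat U * U = 1\<^sub>m n \<and> U * transpose_mat U = 1\<^sub>m n \<and>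
     (\<forall>k<n. A *\<^sub>v col U k = d k \<cdot>\<^sub>v col U k \<and> d k < 0 \<and> col U k \<bullet> col U k = 1)"
proof -
  have A: "A \<in> carrier_mat n n" and symA: "transpose_mat A = A"
    and stab: "\<forall>k. eigenvalue (map_mat complex_of_real A) k \<longrightarrow> Re k < 0"
    using assms unfolding is_SSS_def by auto
  obtain U d where U: "U \<in> carrier_mat n n" and UtU: "transpose_mat U * U = 1\<^sub>m n"
    and AU: "A = U * diagm n d * transpose_mat U"
    using spectral[OF A symA] by blast
  have Ut: "transpose_mat U \<in> carrier_mat n n" using U by simp
  have UUt: "U * transpose_mat U = 1\<^sub>m n" by (rule mat_mult_left_right_inverse[OF Ut U UtU])
  have AUe: "A * U = U * diagm n d"
  proof -
    have "A * U = U * diagm n d * (transpose_mat U * U)"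
      unfolding AU using U Ut by (simp add: assoc_mult_mat[of _ n n _ n _ n] mult_carrier_mat[of _ n n _ n])
    also have "\<dots> = U * diagm n d" unfolding UtU using U by simp
    finally show ?thesis .
  qed
  have ev: "A *\<^sub>v col U k = d k \<cdot>\<^sub>v col U k" if k: "k < n" for k
  proof -
    have "A *\<^sub>v col U k = col (A * U) k" by (rule col_mult2[OF A U k, symmetric])
    also have "\<dots> = col (U * diagm n d) k" unfolding AUe ..
    also have "\<dots> = U *\<^sub>v col (diagm n d) k" by (rule col_mult2[OF U diagm_carrier k])
    also have "col (diagm n d) k = d k \<cdot>\<^sub>v unit_vec n k"
      using k by (intro eq_vecI) (auto simp: diagm_def unit_vec_def)
    also have "U *\<^sub>v (d k \<cdot>\<^sub>v unit_vec n k) = d k \<cdot>\<^sub>v (U *\<^sub>v unit_vec n k)"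
      by (rule mult_mat_vec[OF U]) simp
    also have "U *\<^sub>v unit_vec n k = col U k"
    proof -
      have "col U k = col (U * 1\<^sub>m n) k" using U by simp
      also have "\<dots> = U *\<^sub>v col (1\<^sub>m n) k" by (rule col_mult2[OF U one_carrier_mat k])
      finally show ?thesis using k by simp
    qed
    finally show ?thesis .
  qed
  have nrm: "col U k \<bullet> col U k = 1" if k: "k < n" for k
  proof -
    have "(transpose_mat U * U) $$ (k,k) = 1" using UtU k by simp
    then show ?thesis using U k by simp
  qed
  have neg: "d k < 0" if k: "k < n" for k
  proof -
    define v where "v = map_vec complex_of_real (col U k)"
    have colc: "col U k \<in> carrier_vec n" using U by (metis carrier_matD(1) col_dim)
    have "eigenvector (map_mat complex_of_real A) v (complex_of_real (d k))"
      unfolding eigenvector_def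
    proof (intro conjI)
      show "v \<in> carrier_vec (dim_row (map_mat complex_of_real A))" unfolding v_def using colc A by simp
      show "v \<noteq> 0\<^sub>v (dim_row (map_mat complex_of_real A))"
      proof
        assume "v = 0\<^sub>v (dim_row (map_mat complex_of_real A))"
        then have "col U k = 0\<^sub>v n" unfolding v_def using A by simp
        then show False using nrm[OF k] U by simp
      qed
      have "map_mat complex_of_real A *\<^sub>v v = map_vec complex_of_real (A *\<^sub>v col U k)"
        unfolding v_def by (rule of_real_hom.mult_mat_vec_hom[OF A colc, symmetric])
      also have "\<dots> = complex_of_real (d k) \<cdot>\<^sub>v v" unfolding ev[OF k] v_def by (rule of_real_hom.vec_hom_smult)
      finally show "map_mat complex_of_real A *\<^sub>v v = complex_of_real (d k) \<cdot>\<^sub>v v" .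
    qed
    then have "eigenvalue (map_mat complex_of_real A) (complex_of_real (d k))" unfolding eigenvalue_def by blast
    then show ?thesis using stab by fastforce
  qed
  show ?thesis using U UtU UUt ev neg nrm by blast
qed

lemma sss_pf: assumes SSS: "is_SSS n A b"
  shows "\<exists>wk d. (\<forall>k<n. d k < 0 \<and> wk k \<ge> 0) \<and> sss_tf A b = (\<Sum>k<n. CF (wk k) / LF (d k))"
proof -
  have A: "A \<in> carrier_mat n n" and bv: "b \<in> carrier_vec n" and symA: "transpose_mat A = A"
    using SSS unfolding is_SSS_def by auto
  obtain U d where U: "U \<in> carrier_mat n n" and UtU: "transpose_mat U * U = 1\<^sub>m n"
    and UUt: "U * transpose_mat U = 1\<^sub>m n"
    and ev: "\<And>k. k < n \<Longrightarrow> A *\<^sub>v col U k = d k \<cdot>\<^sub>v col U k"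
    and dneg: "\<And>k. k < n \<Longrightarrow> d k < 0"
    using sss_facts[OF SSS] by blast
  define u where "u = (\<lambda>k. col U k)"
  have uc: "\<And>k. u k \<in> carrier_vec n" unfolding u_def using U by (metis carrier_matD(1) col_dim)
  define wk where "wk = (\<lambda>k. (u k \<bullet> b)\<^sup>2)"
  define Nk where "Nk = (\<Sum>k\<in>{..<n}. [:complex_of_real (wk k):] * (\<Prod>j\<in>{..<n}-{k}. [:- complex_of_real (d j), 1:]))"
  define Dk where "Dk = (\<Prod>j\<in>{..<n}. [:- complex_of_real (d j), 1:])"
  have RHS: "(\<Sum>k<n. CF (wk k) / LF (d k)) = to_fract Nk / to_fract Dk"
  proof -
    have "(\<Sum>k<n. CF (wk k) / LF (d k)) = (\<Sum>k<n. CF (wk k) * (\<Prod>j\<in>{..<n}-{k}. LF (d j))) / (\<Prod>j<n. LF (d j))"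
      by (rule frac_combine) auto
    also have "\<dots> = to_fract Nk / to_fract Dk"
      by (simp only: Nk_def Dk_def to_fract_sum to_fract_mult to_fract_prod')
    finally show ?thesis .
  qed
  define Ac where "Ac = map_mat complex_of_real A"
  define M where "M = char_poly_matrix Ac"
  define bp where "bp = map_vec (\<lambda>x. [:complex_of_real x:]) b"
  define num where "num = bp \<bullet> (adj_mat M *\<^sub>v bp)"
  define den where "den = det M"
  have LHS: "sss_tf A b = to_fract num / to_fract den"
    unfolding sss_tf_def Let_def num_def den_def M_def Ac_def bp_def by (simp add: Fract_conv_to_fract)
  have Acc: "Ac \<in> carrier_mat n n" unfolding Ac_def using A by simp
  have Mc: "M \<in> carrier_mat n n" unfolding M_def using Acc by simp
  have bpc: "bp \<in> carrier_vec n" unfolding bp_def using bv by simp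
  note adj = adj_mat[OF Mc]
  have den0: "den \<noteq> 0"
  proof -
    have "coeff (char_poly Ac) n = 1" using degree_monic_char_poly[OF Acc] by simp
    then show ?thesis unfolding den_def M_def char_poly_def by auto
  qed
  have Dk0: "Dk \<noteq> 0" unfolding Dk_def by auto
  define Uc where "Uc = map_mat complex_of_real U"
  have Ucc: "Uc \<in> carrier_mat n n" unfolding Uc_def using U by simp
  have UcUct: "Uc * transpose_mat Uc = 1\<^sub>m n"
  proof -
    have "map_mat complex_of_real (U * transpose_mat U) = Uc * transpose_mat Uc"
      unfolding Uc_def map_mat_transpose by (rule of_real_hom.mat_hom_mult[OF U]) (use U in simp)
    then show ?thesis unfolding UUt by (simp add: of_real_hom.mat_hom_one)
  qed
  define bc where "bc = map_vec complex_of_real b"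
  have bcc: "bc \<in> carrier_vec n" unfolding bc_def using bv by simp
  define uv where "uv = (\<lambda>k. map_vec complex_of_real (u k))"
  have uvc: "\<And>k. uv k \<in> carrier_vec n" unfolding uv_def using uc by simp
  have colUc: "\<And>k. k < n \<Longrightarrow> col Uc k = uv k" unfolding Uc_def uv_def u_def using U by simp
  have cdef: "\<And>k. uv k \<bullet> bc = complex_of_real (u k \<bullet> b)"
    unfolding uv_def bc_def by (rule of_real_hom.scalar_prod_hom[symmetric]) (use uc bv in simp)
  have key: "poly num (complex_of_real s) * poly Dk (complex_of_real s) =
             poly Nk (complex_of_real s) * poly den (complex_of_real s)" for s
  proof -
    define \<sigma> where "\<sigma> = complex_of_real s"
    have Hs: "semiring_hom (\<lambda>p::complex poly. poly p \<sigma>)" by unfold_locales auto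
    define Ms where "Ms = map_mat (\<lambda>p. poly p \<sigma>) M"
    define X where "X = map_mat (\<lambda>p. poly p \<sigma>) (adj_mat M)"
    define \<delta> where "\<delta> = poly den \<sigma>"
    have Msc: "Ms \<in> carrier_mat n n" and Xc: "X \<in> carrier_mat n n"
      unfolding Ms_def X_def using Mc adj by auto
    have MsX: "Ms * X = \<delta> \<cdot>\<^sub>m 1\<^sub>m n"
    proof -
      have "Ms * X = map_mat (\<lambda>p. poly p \<sigma>) (M * adj_mat M)"
        unfolding Ms_def X_def by (rule semiring_hom.mat_hom_mult[OF Hs Mc adj(1), symmetric])
      also have "\<dots> = \<delta> \<cdot>\<^sub>m 1\<^sub>m n" unfolding adj(2) \<delta>_def den_def by (rule eq_matI) auto
      finally show ?thesis .
    qed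
    have bpb: "map_vec (\<lambda>p. poly p \<sigma>) bp = bc" unfolding bp_def bc_def by (rule eq_vecI) auto
    define y where "y = X *\<^sub>v bc"
    have yc: "y \<in> carrier_vec n" unfolding y_def by (rule mult_mat_vec_carrier[OF Xc bcc])
    have numv: "poly num \<sigma> = bc \<bullet> y"
    proof -
      have "poly num \<sigma> = map_vec (\<lambda>p. poly p \<sigma>) bp \<bullet> map_vec (\<lambda>p. poly p \<sigma>) (adj_mat M *\<^sub>v bp)"
        unfolding num_def by (rule semiring_hom.scalar_prod_hom[OF Hs]) (use bpc adj in simp)
      also have "map_vec (\<lambda>p. poly p \<sigma>) (adj_mat M *\<^sub>v bp) = X *\<^sub>v bc"
        unfolding X_def bpb[symmetric] by (rule semiring_hom.mult_mat_vec_hom[OF Hs adj(1) bpc])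
      finally show ?thesis unfolding bpb y_def .
    qed
    have My: "Ms *\<^sub>v y = \<delta> \<cdot>\<^sub>v bc"
    proof -
      have "Ms *\<^sub>v y = (Ms * X) *\<^sub>v bc" unfolding y_def using Msc Xc bcc by simp
      also have "\<dots> = \<delta> \<cdot>\<^sub>v bc" unfolding MsX
      proof (rule eq_vecI)
        fix i assume "i < dim_vec (\<delta> \<cdot>\<^sub>v bc)"
        then have i: "i < n" using bcc by simp
        have "row (\<delta> \<cdot>\<^sub>m 1\<^sub>m n) i = \<delta> \<cdot>\<^sub>v unit_vec n i" using i by (intro eq_vecI) auto
        then show "((\<delta> \<cdot>\<^sub>m 1\<^sub>m n) *\<^sub>v bc) $ i = (\<delta> \<cdot>\<^sub>v bc) $ i"
          using i bcc by simp
      qed (use bcc in simp)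
      finally show ?thesis .
    qed
    have Msent: "\<And>i j. i < n \<Longrightarrow> j < n \<Longrightarrow> Ms $$ (i,j) = (if i = j then \<sigma> else 0) - complex_of_real (A $$ (i,j))"
      unfolding Ms_def M_def char_poly_matrix_def Ac_def using A by auto
    have Mssym: "transpose_mat Ms = Ms"
    proof (rule eq_matI)
      fix i j assume "i < dim_row Ms" "j < dim_col Ms"
      then have i: "i < n" and j: "j < n" using Msc by auto
      have "A $$ (j,i) = A $$ (i,j)" using arg_cong[OF symA, of "\<lambda>B. B $$ (i,j)"] i j A by simp
      then show "transpose_mat Ms $$ (i, j) = Ms $$ (i, j)" using i j Msc Msent by auto
    qed (use Msc in auto)
    have Msu: "Ms *\<^sub>v uv k = (\<sigma> - complex_of_real (d k)) \<cdot>\<^sub>v uv k" if k: "k < n" for k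
    proof (rule eq_vecI)
      fix i assume "i < dim_vec ((\<sigma> - complex_of_real (d k)) \<cdot>\<^sub>v uv k)"
      then have i: "i < n" using uvc[of k] by simp
      have Au: "(\<Sum>j\<in>{0..<n}. A $$ (i,j) * u k $ j) = d k * u k $ i"
      proof -
        have "(A *\<^sub>v u k) $ i = (d k \<cdot>\<^sub>v u k) $ i" using ev[OF k] unfolding u_def by simp
        then show ?thesis using i A uc[of k] by (simp add: scalar_prod_def)
      qed
      have "(Ms *\<^sub>v uv k) $ i = (\<Sum>j\<in>{0..<n}. ((if i = j then \<sigma> else 0) - complex_of_real (A $$ (i,j))) * uv k $ j)"
        using i Msc uvc[of k] Msent by (simp add: scalar_prod_def)
      also have "\<dots> = (\<Sum>j\<in>{0..<n}. (if i = j then \<sigma> * uv k $ j else 0)) - (\<Sum>j\<in>{0..<n}. complex_of_real (A $$ (i,j)) * uv k $ j)"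
      proof -
        have "(\<Sum>j\<in>{0..<n}. ((if i = j then \<sigma> else 0) - complex_of_real (A $$ (i,j))) * uv k $ j) =
          (\<Sum>j\<in>{0..<n}. (if i = j then \<sigma> * uv k $ j else 0) - complex_of_real (A $$ (i,j)) * uv k $ j)"
          by (rule sum.cong) (auto simp: algebra_simps)
        also have "\<dots> = (\<Sum>j\<in>{0..<n}. (if i = j then \<sigma> * uv k $ j else 0)) - (\<Sum>j\<in>{0..<n}. complex_of_real (A $$ (i,j)) * uv k $ j)"
          by (rule sum_subtractf)
        finally show ?thesis .
      qed
      also have "(\<Sum>j\<in>{0..<n}. (if i = j then \<sigma> * uv k $ j else 0)) = \<sigma> * uv k $ i" using i by simp
      also have "(\<Sum>j\<in>{0..<n}. complex_of_real (A $$ (i,j)) * uv k $ j) = complex_of_real (d k * u k $ i)"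
        unfolding Au[symmetric] uv_def using uc[of k] by simp
      finally show "(Ms *\<^sub>v uv k) $ i = ((\<sigma> - complex_of_real (d k)) \<cdot>\<^sub>v uv k) $ i"
        using i uvc[of k] unfolding uv_def by (simp add: algebra_simps)
    qed (use Msc uvc[of k] in simp)
    have eqk: "(\<sigma> - complex_of_real (d k)) * (uv k \<bullet> y) = \<delta> * (uv k \<bullet> bc)" if k: "k < n" for k
    proof -
      have "(transpose_mat Ms *\<^sub>v uv k) \<bullet> y = uv k \<bullet> (Ms *\<^sub>v y)"
        by (rule transpose_vec_mult_scalar[OF Msc yc uvc])
      then have "((\<sigma> - complex_of_real (d k)) \<cdot>\<^sub>v uv k) \<bullet> y = uv k \<bullet> (\<delta> \<cdot>\<^sub>v bc)"
        unfolding Mssym Msu[OF k] My .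
      then show ?thesis using uvc[of k] yc bcc by simp
    qed
    have pars: "bc \<bullet> y = (\<Sum>k<n. (uv k \<bullet> bc) * (uv k \<bullet> y))"
    proof -
      have Uct: "transpose_mat Uc \<in> carrier_mat n n" using Ucc by simp
      have "y = (Uc * transpose_mat Uc) *\<^sub>v y" unfolding UcUct using yc by simp
      also have "\<dots> = Uc *\<^sub>v (transpose_mat Uc *\<^sub>v y)" using Ucc Uct yc by simp
      finally have "bc \<bullet> y = bc \<bullet> (Uc *\<^sub>v (transpose_mat Uc *\<^sub>v y))" by simp
      also have "\<dots> = (transpose_mat Uc *\<^sub>v bc) \<bullet> (transpose_mat Uc *\<^sub>v y)"
        by (rule transpose_vec_mult_scalar[OF Ucc _ bcc, symmetric]) (use Uct yc in simp)
      also have "\<dots> = (\<Sum>k\<in>{0..<n}. (uv k \<bullet> bc) * (uv k \<bullet> y))"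
        unfolding scalar_prod_def[of "transpose_mat Uc *\<^sub>v bc"] using Ucc
        by (intro sum.cong) (auto simp: colUc)
      finally show ?thesis by (simp add: atLeast0LessThan)
    qed
    have "poly num \<sigma> * poly Dk \<sigma> = (\<Sum>k<n. (uv k \<bullet> bc) * (uv k \<bullet> y) * (\<Prod>j<n. (\<sigma> - complex_of_real (d j))))"
      unfolding numv pars Dk_def poly_prod by (simp add: sum_distrib_right)
    also have "\<dots> = (\<Sum>k<n. complex_of_real (wk k) * (\<Prod>j\<in>{..<n}-{k}. (\<sigma> - complex_of_real (d j))) * \<delta>)"
    proof (rule sum.cong[OF refl])
      fix k assume "k \<in> {..<n}"
      then have k: "k < n" by simp
      have "(\<Prod>j<n. (\<sigma> - complex_of_real (d j))) = (\<sigma> - complex_of_real (d k)) * (\<Prod>j\<in>{..<n}-{k}. (\<sigma> - complex_of_real (d j)))"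
        using k by (intro prod.remove) auto
      then have "(uv k \<bullet> bc) * (uv k \<bullet> y) * (\<Prod>j<n. (\<sigma> - complex_of_real (d j))) =
          (uv k \<bullet> bc) * ((\<sigma> - complex_of_real (d k)) * (uv k \<bullet> y)) * (\<Prod>j\<in>{..<n}-{k}. (\<sigma> - complex_of_real (d j)))"
        by (simp add: ac_simps)
      also have "\<dots> = (uv k \<bullet> bc) * (uv k \<bullet> bc) * (\<Prod>j\<in>{..<n}-{k}. (\<sigma> - complex_of_real (d j))) * \<delta>"
        unfolding eqk[OF k] by (simp add: ac_simps)
      also have "(uv k \<bullet> bc) * (uv k \<bullet> bc) = complex_of_real (wk k)"
        unfolding cdef wk_def by (simp add: power2_eq_square)
      finally show "(uv k \<bullet> bc) * (uv k \<bullet> y) * (\<Prod>j<n. (\<sigma> - complex_of_real (d j))) =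
          complex_of_real (wk k) * (\<Prod>j\<in>{..<n}-{k}. (\<sigma> - complex_of_real (d j))) * \<delta>" .
    qed
    also have "\<dots> = poly Nk \<sigma> * poly den \<sigma>"
      unfolding Nk_def \<delta>_def by (simp add: poly_sum poly_prod sum_distrib_right)
    finally show ?thesis unfolding \<sigma>_def .
  qed
  have peq: "num * Dk = Nk * den"
  proof (rule ccontr)
    assume ne: "num * Dk \<noteq> Nk * den"
    then have ne': "num * Dk - Nk * den \<noteq> 0" by simp
    have "range complex_of_real \<subseteq> {x. poly (num * Dk - Nk * den) x = 0}"
      using key by auto
    moreover have "finite {x. poly (num * Dk - Nk * den) x = 0}" by (rule poly_roots_finite[OF ne'])
    ultimately have "finite (range complex_of_real)" by (rule finite_subset)
    then have "finite (UNIV :: real set)" by (rule finite_imageD) (auto simp: inj_on_def)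
    then show False using infinite_UNIV_char_0 by blast
  qed
  have "sss_tf A b = to_fract Nk / to_fract Dk"
    unfolding LHS using den0 Dk0 peq by (simp add: frac_eq_eq flip: to_fract_mult)
  then have "sss_tf A b = (\<Sum>k<n. CF (wk k) / LF (d k))" unfolding RHS .
  moreover have "\<forall>k<n. d k < 0 \<and> wk k \<ge> 0" using dneg unfolding wk_def by auto
  ultimately show ?thesis by blast
qed





lemma CF_neg: "to_fract [:- complex_of_real x:] = - CF x"
proof -
  have "[:- complex_of_real x:] = - [:complex_of_real x:]" by simp
  then show ?thesis by (simp only: to_fract_uminus)
qed

lemma sum_split_nr: fixes f :: "nat \<Rightarrow> 'a :: comm_monoid_add" and n r :: nat shows "(\<Sum>k<n+r. f k) = (\<Sum>k<n. f k) + (\<Sum>i<r. f (n + i)) "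
  by (induction r) (auto simp: ac_simps)

theorem lemma2:
  fixes n r :: nat and A :: "real mat" and b :: "real vec"
    and bi lam :: "nat \<Rightarrow> real" and S :: "real multiset"
  assumes "is_SSS n A b"
    and "is_ZIP r bi lam"
    and "r < n"
    and "sss_tf A b - pr_tf r bi lam \<noteq> 0"
    and "size S = 2 * r"
    and "\<forall>x\<in>#S. x > 0"
    and "\<forall>x. count S x \<le> zero_mult (sss_tf A b - pr_tf r bi lam) (complex_of_real x)"
  shows "\<forall>z. count (image_mset complex_of_real S) z < zero_mult (sss_tf A b - pr_tf r bi lam) z
            \<longrightarrow> z \<in> \<real> \<and> Re z < 0"
proof -
  obtain wk d where wd: "\<forall>k<n. d k < 0 \<and> wk k \<ge> 0" and H: "sss_tf A b = (\<Sum>k<n. CF (wk k) / LF (d k))"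
    using sss_pf[OF assms(1)] by blast
  have zip: "\<forall>i<r. lam i < 0 \<and> bi i > 0" using assms(2) unfolding is_ZIP_def by auto
  have Hr: "pr_tf r bi lam = (\<Sum>i<r. CF (bi i) / LF (lam i))"
    unfolding pr_tf_def by (simp add: Fract_conv_to_fract)
  define c where "c = (\<lambda>k. if k < n then wk k else - bi (k - n))"
  define p where "p = (\<lambda>k. if k < n then d k else lam (k - n))"
  define K where "K = {..<n+r}"
  define W where "W = (\<lambda>x. \<Sum>k\<in>{k\<in>K. p k = x}. c k)"
  define P where "P = {x\<in>p ` K. W x \<noteq> 0}"
  define E where "E = sss_tf A b - pr_tf r bi lam"
  have "(\<Sum>k\<in>K. CF (c k) / LF (p k)) = (\<Sum>k<n. CF (c k) / LF (p k)) + (\<Sum>i<r. CF (c (n+i)) / LF (p (n+i)))"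
    unfolding K_def by (rule sum_split_nr)
  also have "(\<Sum>k<n. CF (c k) / LF (p k)) = sss_tf A b" unfolding H c_def p_def by simp
  also have "(\<Sum>i<r. CF (c (n+i)) / LF (p (n+i))) = - pr_tf r bi lam"
    unfolding Hr c_def p_def by (simp add: sum_negf CF_neg)
  finally have EK: "E = (\<Sum>k\<in>K. CF (c k) / LF (p k))" unfolding E_def by simp
  have finK: "finite K" unfolding K_def by simp
  have EN: "E = to_fract (NP P W) / to_fract (DP P)"
    unfolding EK W_def P_def by (rule group_poles[OF finK])
  have finP: "finite P" unfolding P_def using finK by auto
  have nzP: "\<forall>x\<in>P. W x \<noteq> 0" unfolding P_def by auto
  have negP: "\<forall>x\<in>P. x < 0"
  proof
    fix x assume "x \<in> P"
    then obtain k where "k \<in> K" "x = p k" unfolding P_def by auto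
    then show "x < 0" using wd zip unfolding p_def K_def by (cases "k < n") auto
  qed
  have cnegP: "card {x\<in>P. W x < 0} \<le> r"
  proof -
    have "{x\<in>P. W x < 0} \<subseteq> lam ` {..<r}"
    proof
      fix x assume x: "x \<in> {x\<in>P. W x < 0}"
      have "\<exists>k\<in>{k\<in>K. p k = x}. c k < 0"
      proof (rule ccontr)
        assume "\<not> ?thesis"
        then have "W x \<ge> 0" unfolding W_def by (intro sum_nonneg) auto
        then show False using x by auto
      qed
      then obtain k where k: "k \<in> K" "p k = x" "c k < 0" by auto
      then have "\<not> k < n" using wd unfolding c_def by auto
      then have "k - n < r" "x = lam (k - n)" using k unfolding K_def p_def by auto
      then show "x \<in> lam ` {..<r}" by auto
    qed
    then have "card {x\<in>P. W x < 0} \<le> card (lam ` {..<r})" by (rule card_mono[rotated]) auto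
    also have "\<dots> \<le> card {..<r}" by (rule card_image_le) auto
    finally show ?thesis by simp
  qed
  have N0: "NP P W \<noteq> 0" using assms(4) unfolding E_def[symmetric] EN by auto
  have zm: "\<And>z. zero_mult E z = order z (NP P W)"
    unfolding EN by (rule zero_mult_NP[OF finP nzP N0])
  show ?thesis
    using core[OF finP nzP negP cnegP N0 assms(5) assms(6)] assms(7)
    unfolding E_def[symmetric] zm by blast
qed


end
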